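(* Let $n\geq 3$, $k\in\mathbb{Z}_n$ with $k\neq 0$ and $2k\not\equiv 0\pmod n$, and let $C$ be a perfect code in $\mathrm{GP}(n,k)$. Then $|C\cap U|=|C\cap V|=\frac{n}{4}$; in particular $n\equiv 0\pmod 4$.
   Context: For an integer $n\geq 3$ and a nonzero $k\in\mathbb{Z}_n$, the generalized Petersen graph $\mathrm{GP}(n,k)$ is the simple graph with vertex set $\{u_i,v_i\mid i\in\mathbb{Z}_n\}$ and edges $u_iu_{i+1}$, $u_iv_i$, $v_iv_{i+k}$ for all $i\in\mathbb{Z}_n$ (indices modulo $n$). Let $U=\{u_i\mid i\in\mathbb{Z}_n\}$ and $V=\{v_i\mid i\in\mathbb{Z}_n\}$. A perfect code in a graph $\Gamma$ is an independent set $C\subseteq V(\Gamma)$ such that every vertex not in $C$ is adjacent to exactly one vertex of $C$. *)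

theory Defs
  imports Main
begin

datatype gpv = U nat | V nat

definition gp_vertices :: "nat \<Rightarrow> gpv set" where
  "gp_vertices n = U ` {0..<n} \<union> V ` {0..<n}"

definition gp_U :: "nat \<Rightarrow> gpv set" where "gp_U n = U ` {0..<n}"
definition gp_V :: "nat \<Rightarrow> gpv set" where "gp_V n = V ` {0..<n}"

definition gp_arc :: "nat \<Rightarrow> nat \<Rightarrow> gpv \<Rightarrow> gpv \<Rightarrow> bool" where
  "gp_arc n k x y \<longleftrightarrow> (\<exists>i<n.
      (x = U i \<and> y = U ((i + 1) mod n)) \<or>
      (x = U i \<and> y = V i) \<or>
      (x = V i \<and> y = V ((i + k) mod n)))"

definition gp_adj :: "nat \<Rightarrow> nat \<Rightarrow> gpv \<Rightarrow> gpv \<Rightarrow> bool" where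
  "gp_adj n k x y \<longleftrightarrow> x \<noteq> y \<and> (gp_arc n k x y \<or> gp_arc n k y x)"

definition perfect_code :: "'a set \<Rightarrow> ('a \<Rightarrow> 'a \<Rightarrow> bool) \<Rightarrow> 'a set \<Rightarrow> bool" where
  "perfect_code Vs adj C \<longleftrightarrow> C \<subseteq> Vs \<and>
     (\<forall>x\<in>C. \<forall>y\<in>C. \<not> adj x y) \<and>
     (\<forall>x\<in>Vs - C. \<exists>!c. c \<in> C \<and> adj x c)"

end

theory Submission
  imports Defs
begin

lemma modsuc: "(j::nat) < n \<Longrightarrow> (j + 1) mod n = (if j + 1 = n then 0 else j + 1)"
  by (cases "j + 1 = n") auto
lemma modpred: fixes i n :: nat assumes "i < n" shows "(i + n - 1) mod n = (if i = 0 then n - 1 else i - 1)"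
proof (cases "i = 0")
  case False
  have e: "i + n - 1 = (i - 1) + n" using False by simp
  have "(i + n - 1) mod n = (i - 1) mod n" unfolding e by (rule mod_add_self2)
  also have "\<dots> = i - 1" using assms by simp
  finally show ?thesis using False by simp
qed (use assms in simp)
lemma modk: "(j::nat) < n \<Longrightarrow> k < n \<Longrightarrow> (j + k) mod n = (if j + k < n then j + k else j + k - n)"
proof (cases "j + k < n")
  case False
  assume a: "j < n" "k < n"
  have "(j + k) mod n = (j + k - n) mod n" using False by (simp add: le_mod_geq)
  also have "\<dots> = j + k - n" using a False by simp
  finally show ?thesis using False by simp
qed simp
lemma modnk: fixes i n k :: nat assumes "i < n" "k < n" shows "(i + n - k) mod n = (if k \<le> i then i - k else i + n - k)"
proof (cases "k \<le> i")
  case True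
  have e: "i + n - k = (i - k) + n" using True by simp
  have "(i + n - k) mod n = (i - k) mod n" unfolding e by (rule mod_add_self2)
  also have "\<dots> = i - k" using assms by simp
  finally show ?thesis using True by simp
next
  case False
  then show ?thesis using assms by simp
qed

lemma arcUU: "gp_arc n k (U i) (U j) \<longleftrightarrow> i < n \<and> j = (i+1) mod n"
  unfolding gp_arc_def by auto
lemma arcUV: "gp_arc n k (U i) (V j) \<longleftrightarrow> i < n \<and> j = i"
  unfolding gp_arc_def by auto
lemma arcVU: "\<not> gp_arc n k (V i) (U j)"
  unfolding gp_arc_def by auto
lemma arcVV: "gp_arc n k (V i) (V j) \<longleftrightarrow> i < n \<and> j = (i+k) mod n"
  unfolding gp_arc_def by auto

lemma predsuc: fixes i j n :: nat assumes "i < n" shows "(j < n \<and> i = (j+1) mod n) \<longleftrightarrow> j = (i+n-1) mod n"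
proof -
  have 1: "(j < n \<and> i = (j+1) mod n) \<longleftrightarrow> (j < n \<and> i = (if j + 1 = n then 0 else j + 1))"
    using modsuc[of j n] by auto
  show ?thesis unfolding 1 modpred[OF assms] using assms by auto
qed
lemma predk: fixes i j n k :: nat assumes "i < n" "k < n" shows "(j < n \<and> i = (j+k) mod n) \<longleftrightarrow> j = (i+n-k) mod n"
proof -
  have 1: "(j < n \<and> i = (j+k) mod n) \<longleftrightarrow> (j < n \<and> i = (if j + k < n then j + k else j + k - n))"
    using modk[of j n k] assms by auto
  show ?thesis unfolding 1 modnk[OF assms] using assms by auto
qed

definition NB :: "nat \<Rightarrow> nat \<Rightarrow> gpv \<Rightarrow> gpv set" where
  "NB n k c = {y. y = c \<or> gp_adj n k c y}"

lemma NU_U: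
  assumes "i < n" "n \<ge> 3"
  shows "NB n k (U i) \<inter> gp_U n = {U i, U ((i+1) mod n), U ((i+n-1) mod n)}"
proof (rule set_eqI)
  fix y show "y \<in> NB n k (U i) \<inter> gp_U n \<longleftrightarrow> y \<in> {U i, U ((i+1) mod n), U ((i+n-1) mod n)}"
  proof (cases y)
    case (U j)
    have "(i + n - 1) mod n < n" "(i+1) mod n < n" using assms by auto
    then show ?thesis using assms U predsuc[of i n j]
      by (auto simp: NB_def gp_adj_def arcUU gp_U_def)
  qed (auto simp: gp_U_def)
qed

lemma NV_U:
  assumes "i < n"
  shows "NB n k (V i) \<inter> gp_U n = {U i}"
proof (rule set_eqI)
  fix y show "y \<in> NB n k (V i) \<inter> gp_U n \<longleftrightarrow> y \<in> {U i}"
  proof (cases y)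
    case (U j)
    then show ?thesis using assms
      by (auto simp: NB_def gp_adj_def arcUV arcVU gp_U_def)
  qed (auto simp: gp_U_def)
qed

lemma NU_V:
  assumes "i < n"
  shows "NB n k (U i) \<inter> gp_V n = {V i}"
proof (rule set_eqI)
  fix y show "y \<in> NB n k (U i) \<inter> gp_V n \<longleftrightarrow> y \<in> {V i}"
  proof (cases y)
    case (V j)
    then show ?thesis using assms
      by (auto simp: NB_def gp_adj_def arcUV arcVU gp_V_def)
  qed (auto simp: gp_V_def)
qed

lemma NV_V:
  assumes "i < n" "k < n"
  shows "NB n k (V i) \<inter> gp_V n = {V i, V ((i+k) mod n), V ((i+n-k) mod n)}"
proof (rule set_eqI)
  fix y show "y \<in> NB n k (V i) \<inter> gp_V n \<longleftrightarrow> y \<in> {V i, V ((i+k) mod n), V ((i+n-k) mod n)}"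
  proof (cases y)
    case (V j)
    have "(i + n - k) mod n < n" "(i+k) mod n < n" using assms by auto
    then show ?thesis using assms V predk[of i n k j]
      by (auto simp: NB_def gp_adj_def arcVV gp_V_def)
  qed (auto simp: gp_V_def)
qed

lemma card3U: "i < n \<Longrightarrow> n \<ge> 3 \<Longrightarrow> card {U i, U ((i+1) mod n), U ((i+n-1) mod n)} = 3"
  using modsuc[of i n] modpred[of i n] by (cases "i=0"; cases "i+1=n"; simp)
lemma card3V: "i < n \<Longrightarrow> 0 < k \<Longrightarrow> k < n \<Longrightarrow> 2*k \<noteq> n \<Longrightarrow> card {V i, V ((i+k) mod n), V ((i+n-k) mod n)} = 3"
  using modk[of i n k] modnk[of i n k] by (cases "k \<le> i"; cases "i+k<n"; auto simp: card_insert_if)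

lemma count_lemma:
  assumes fin: "finite Vs" and WV: "W \<subseteq> Vs" and pc: "perfect_code Vs adj C"
    and sym: "\<And>x y. adj x y \<Longrightarrow> adj y x"
  shows "card W = (\<Sum>c\<in>C. card ({y. y = c \<or> adj c y} \<inter> W))"
proof -
  have CV: "C \<subseteq> Vs" and ind: "\<forall>x\<in>C. \<forall>y\<in>C. \<not> adj x y"
    and un: "\<forall>x\<in>Vs - C. \<exists>!c. c \<in> C \<and> adj x c"
    using pc unfolding perfect_code_def by auto
  have finC: "finite C" using CV fin finite_subset by blast
  have finW: "finite W" using WV fin finite_subset by blast
  have eq: "W = (\<Union>c\<in>C. {y. y = c \<or> adj c y} \<inter> W)"
  proof
    show "W \<subseteq> (\<Union>c\<in>C. {y. y = c \<or> adj c y} \<inter> W)"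
    proof
      fix x assume x: "x \<in> W"
      show "x \<in> (\<Union>c\<in>C. {y. y = c \<or> adj c y} \<inter> W)"
      proof (cases "x \<in> C")
        case True then show ?thesis using x by blast
      next
        case False
        then obtain c where "c \<in> C" "adj x c" using un x WV by blast
        then show ?thesis using x sym by blast
      qed
    qed
  qed blast
  have disj: "\<forall>c\<in>C. \<forall>d\<in>C. c \<noteq> d \<longrightarrow>
      ({y. y = c \<or> adj c y} \<inter> W) \<inter> ({y. y = d \<or> adj d y} \<inter> W) = {}"
  proof (intro ballI impI)
    fix c d assume c: "c \<in> C" and d: "d \<in> C" and cd: "c \<noteq> d"
    show "({y. y = c \<or> adj c y} \<inter> W) \<inter> ({y. y = d \<or> adj d y} \<inter> W) = {}"
    proof (rule ccontr)
      assume "\<not> ?thesis"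
      then obtain x where x: "x \<in> W" "x = c \<or> adj c x" "x = d \<or> adj d x" by blast
      show False
      proof (cases "x \<in> C")
        case True
        show ?thesis
        proof (cases "x = c")
          case True
          then have "x \<noteq> d" using cd by simp
          then have "adj d x" using x by simp
          then show ?thesis using ind d \<open>x \<in> C\<close> by blast
        next
          case False
          then have "adj c x" using x by simp
          then show ?thesis using ind c \<open>x \<in> C\<close> by blast
        qed
      next
        case False
        then have "x \<noteq> c" "x \<noteq> d" using c d by auto
        then have "adj x c" "adj x d" using x sym by auto
        moreover have "x \<in> Vs - C" using False x WV by blast
        ultimately show ?thesis using un c d cd by blast
      qed
    qed
  qed
  have "card W = card (\<Union>c\<in>C. {y. y = c \<or> adj c y} \<inter> W)" using eq by simp
  also have "\<dots> = (\<Sum>c\<in>C. card ({y. y = c \<or> adj c y} \<inter> W))"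
    by (rule card_UN_disjoint[OF finC]) (use finW disj in auto)
  finally show ?thesis .
qed

theorem mainTheorem10:
  fixes n k :: nat and C :: "gpv set"
  assumes "n \<ge> 3" and "0 < k" and "k < n" and "(2 * k) mod n \<noteq> 0"
    and "perfect_code (gp_vertices n) (gp_adj n k) C"
  shows "4 * card (C \<inter> gp_U n) = n \<and> 4 * card (C \<inter> gp_V n) = n \<and> n mod 4 = 0"
proof -
  have k2: "2 * k \<noteq> n" using assms(4) by auto
  have fin: "finite (gp_vertices n)" by (simp add: gp_vertices_def)
  have sym: "\<And>x y. gp_adj n k x y \<Longrightarrow> gp_adj n k y x" unfolding gp_adj_def by auto
  have CV: "C \<subseteq> gp_vertices n" using assms(5) unfolding perfect_code_def by auto
  have finC: "finite C" using CV fin finite_subset by blast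
  have Csplit: "C = (C \<inter> gp_U n) \<union> (C \<inter> gp_V n)"
    using CV unfolding gp_vertices_def gp_U_def gp_V_def by blast
  have Cdisj: "(C \<inter> gp_U n) \<inter> (C \<inter> gp_V n) = {}"
    unfolding gp_U_def gp_V_def by auto
  have cU: "card (gp_U n) = n" unfolding gp_U_def by (simp add: card_image inj_on_def)
  have cV: "card (gp_V n) = n" unfolding gp_V_def by (simp add: card_image inj_on_def)
  have sumsplit: "\<And>f. (\<Sum>c\<in>C. f c) = (\<Sum>c\<in>C \<inter> gp_U n. f c) + (\<Sum>c\<in>C \<inter> gp_V n. f c)"
    by (subst Csplit, rule sum.union_disjoint) (use finC Cdisj in auto)
  have a1: "(\<Sum>c\<in>C \<inter> gp_U n. card (NB n k c \<inter> gp_U n)) = 3 * card (C \<inter> gp_U n)"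
  proof -
    have "(\<Sum>c\<in>C \<inter> gp_U n. card (NB n k c \<inter> gp_U n)) = (\<Sum>c\<in>C \<inter> gp_U n. 3)"
    proof (rule sum.cong)
      fix c assume "c \<in> C \<inter> gp_U n"
      then obtain i where "i < n" "c = U i" unfolding gp_U_def by auto
      then show "card (NB n k c \<inter> gp_U n) = 3" using NU_U card3U assms(1) by simp
    qed simp
    then show ?thesis by simp
  qed
  have a2: "(\<Sum>c\<in>C \<inter> gp_V n. card (NB n k c \<inter> gp_U n)) = card (C \<inter> gp_V n)"
  proof -
    have "(\<Sum>c\<in>C \<inter> gp_V n. card (NB n k c \<inter> gp_U n)) = (\<Sum>c\<in>C \<inter> gp_V n. 1)"
    proof (rule sum.cong)
      fix c assume "c \<in> C \<inter> gp_V n"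
      then obtain i where "i < n" "c = V i" unfolding gp_V_def by auto
      then show "card (NB n k c \<inter> gp_U n) = 1" using NV_U by simp
    qed simp
    then show ?thesis by simp
  qed
  have b1: "(\<Sum>c\<in>C \<inter> gp_U n. card (NB n k c \<inter> gp_V n)) = card (C \<inter> gp_U n)"
  proof -
    have "(\<Sum>c\<in>C \<inter> gp_U n. card (NB n k c \<inter> gp_V n)) = (\<Sum>c\<in>C \<inter> gp_U n. 1)"
    proof (rule sum.cong)
      fix c assume "c \<in> C \<inter> gp_U n"
      then obtain i where "i < n" "c = U i" unfolding gp_U_def by auto
      then show "card (NB n k c \<inter> gp_V n) = 1" using NU_V by simp
    qed simp
    then show ?thesis by simp
  qed
  have b2: "(\<Sum>c\<in>C \<inter> gp_V n. card (NB n k c \<inter> gp_V n)) = 3 * card (C \<inter> gp_V n)"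
  proof -
    have "(\<Sum>c\<in>C \<inter> gp_V n. card (NB n k c \<inter> gp_V n)) = (\<Sum>c\<in>C \<inter> gp_V n. 3)"
    proof (rule sum.cong)
      fix c assume "c \<in> C \<inter> gp_V n"
      then obtain i where "i < n" "c = V i" unfolding gp_V_def by auto
      then show "card (NB n k c \<inter> gp_V n) = 3" using NV_V card3V assms(2,3) k2 by simp
    qed simp
    then show ?thesis by simp
  qed
  have UV: "gp_U n \<subseteq> gp_vertices n" "gp_V n \<subseteq> gp_vertices n"
    unfolding gp_vertices_def gp_U_def gp_V_def by auto
  have cnt: "\<And>W. W \<subseteq> gp_vertices n \<Longrightarrow> card W = (\<Sum>c\<in>C. card (NB n k c \<inter> W))"
    unfolding NB_def by (rule count_lemma[OF fin _ assms(5) sym])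
  have eU: "n = 3 * card (C \<inter> gp_U n) + card (C \<inter> gp_V n)"
    using cnt[OF UV(1)] sumsplit[of "\<lambda>c. card (NB n k c \<inter> gp_U n)"] a1 a2 cU by linarith
  have eV: "n = card (C \<inter> gp_U n) + 3 * card (C \<inter> gp_V n)"
    using cnt[OF UV(2)] sumsplit[of "\<lambda>c. card (NB n k c \<inter> gp_V n)"] b1 b2 cV by linarith
  from eU eV have "card (C \<inter> gp_U n) = card (C \<inter> gp_V n)" by linarith
  with eU have "n = 4 * card (C \<inter> gp_V n)" by linarith
  then have m4: "n mod 4 = 0" by (metis mod_mult_self1_is_0)
  show ?thesis using eU \<open>card (C \<inter> gp_U n) = card (C \<inter> gp_V n)\<close> m4 by linarith
qed

end
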